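(* Let $g:[0,1)\to\mathbb{R}$ be the function defined in the context, and let $g'(0)$ denote its right derivative at $0$. If $C'(0)<Py_H-Py_L$, then $g'(0)>0$ (and consequently every maximizer $a^*$ of $g$ on $[0,1)$ satisfies $a^*>0$). Further, if $0\le\beta\le u$, then $g'(0)>0$ holds only if $C'(0)<Py_H-Py_L$.
   Context: Fix $P>0$, $y_H>y_L\ge 0$, a real number $u$ and $\gamma\in(0,1]$. Let $C:[0,1)\to\mathbb{R}$ satisfy $C(0)=0$, $C$ increasing, strictly convex, twice differentiable, $C(a)\to\infty$ as $a\to1$. Let $\eta:[0,\infty)\to\mathbb{R}$ be strictly convex, increasing, twice differentiable with $\eta(0)=0$, and let $\beta\ge0$ satisfy $\gamma\eta'(\beta)=1$ (assumed to exist). For $a\in[0,1)$ define $w_L^*(a)=\max\{0,u-aC'(a)+C(a)\}$, $w_H^*(a)=w_L^*(a)+C'(a)$, $b_i^*(a)=\min\{\beta,w_i^*(a)\}$ for $i\in\{H,L\}$, and $g(a)=a\,(Py_H-w_H^*(a)+b_H^*(a)-\gamma\eta(b_H^*(a)))+(1-a)\,(Py_L-w_L^*(a)+b_L^*(a)-\gamma\eta(b_L^*(a)))$. (These are the optimal wages and thefts inducing effort $a$ in the one-shot wage-theft principal–agent problem, and $g(a)$ is the employer's resulting profit.) *)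

theory Defs
  imports "HOL-Analysis.Analysis"
begin

definition strict_convex_on :: "real set \<Rightarrow> (real \<Rightarrow> real) \<Rightarrow> bool" where
  "strict_convex_on S f \<longleftrightarrow>
     (\<forall>x\<in>S. \<forall>y\<in>S. \<forall>t. x \<noteq> y \<and> 0 < t \<and> t < 1 \<longrightarrow>
        f ((1 - t) * x + t * y) < (1 - t) * f x + t * f y)"

text \<open>Optimal low wage; Cd is the derivative C' of the cost C.\<close>
definition wL_star :: "(real \<Rightarrow> real) \<Rightarrow> (real \<Rightarrow> real) \<Rightarrow> real \<Rightarrow> real \<Rightarrow> real" where
  "wL_star C Cd u a = max 0 (u - a * Cd a + C a)"

definition wH_star :: "(real \<Rightarrow> real) \<Rightarrow> (real \<Rightarrow> real) \<Rightarrow> real \<Rightarrow> real \<Rightarrow> real" where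
  "wH_star C Cd u a = wL_star C Cd u a + Cd a"

definition profit ::
  "real \<Rightarrow> real \<Rightarrow> real \<Rightarrow> real \<Rightarrow> real \<Rightarrow> real \<Rightarrow> (real \<Rightarrow> real) \<Rightarrow> (real \<Rightarrow> real)
     \<Rightarrow> (real \<Rightarrow> real) \<Rightarrow> real \<Rightarrow> real" where
  "profit P yH yL u \<gamma> \<beta> C Cd \<eta> a =
     (let wL = wL_star C Cd u a; wH = wH_star C Cd u a;
          bL = min \<beta> wL; bH = min \<beta> wH
      in a * (P * yH - wH + bH - \<gamma> * \<eta> bH) + (1 - a) * (P * yL - wL + bL - \<gamma> * \<eta> bL))"

end

theory Submission
  imports Defs
begin

lemma sc_convex: "strict_convex_on S f \<Longrightarrow> convex S \<Longrightarrow> convex_on S (f::real\<Rightarrow>real)"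
proof (rule convex_onI)
  fix t x y :: real assume "strict_convex_on S f" "0 < t" "t < 1" "x \<in> S" "y \<in> S"
  then show "f ((1 - t) *\<^sub>R x + t *\<^sub>R y) \<le> (1 - t) * f x + t * f y"
  proof (cases "x = y")
    case True then show ?thesis by (simp add: algebra_simps)
  next
    case False
    then have "f ((1 - t) * x + t * y) < (1 - t) * f x + t * f y"
      using \<open>strict_convex_on S f\<close> \<open>0 < t\<close> \<open>t < 1\<close> \<open>x \<in> S\<close> \<open>y \<in> S\<close>
      unfolding strict_convex_on_def by blast
    then show ?thesis by simp
  qed
qed

lemma deriv_nonneg:
  assumes mono: "mono_on {0..<1} C" and a: "a \<in> {0..<1::real}"
    and d: "(C has_real_derivative d) (at a within {0..<1})"
  shows "d \<ge> 0"
proof -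
  have sub: "{a..(a+1)/2} \<subseteq> {0..<1}" using a by auto
  have "(C has_real_derivative d) (at a within {a..(a+1)/2})"
    using has_field_derivative_subset[OF d sub] .
  then have "(C has_real_derivative d) (at_right a)"
    using a by (simp add: at_within_Icc_at_right)
  then have lim: "((\<lambda>y. (C y - C a) / (y - a)) \<longlongrightarrow> d) (at_right a)"
    by (simp add: has_field_derivative_iff)
  have "eventually (\<lambda>y. (C y - C a) / (y - a) \<ge> 0) (at_right a)"
    unfolding eventually_at_right_field
  proof (intro exI[of _ 1] conjI allI impI)
    show "a < 1" using a by simp
    fix y assume "a < y" "y < 1"
    then have "C a \<le> C y" using mono a by (auto intro: mono_onD)
    then show "(C y - C a) / (y - a) \<ge> 0" using \<open>a < y\<close> by simp
  qed
  then show ?thesis using tendsto_lowerbound[OF lim] by simp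
qed

definition psi :: "real \<Rightarrow> real \<Rightarrow> (real \<Rightarrow> real) \<Rightarrow> real \<Rightarrow> real" where
  "psi \<beta> \<gamma> \<eta> w = w - min \<beta> w + \<gamma> * \<eta> (min \<beta> w)"

lemma psi_lip_le:
  assumes \<gamma>: "0 < \<gamma>"
    and \<eta>mono: "mono_on {0..} \<eta>"
    and \<eta>conv: "strict_convex_on {0..} \<eta>"
    and \<eta>d: "\<And>x. x \<in> {0..} \<Longrightarrow> (\<eta> has_real_derivative \<eta>d x) (at x within {0..})"
    and \<beta>: "\<beta> \<ge> 0" "\<gamma> * \<eta>d \<beta> = 1"
    and xy: "0 \<le> x" "x \<le> y"
  shows "0 \<le> psi \<beta> \<gamma> \<eta> y - psi \<beta> \<gamma> \<eta> x \<and> psi \<beta> \<gamma> \<eta> y - psi \<beta> \<gamma> \<eta> x \<le> y - x"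
proof -
  have cv: "convex_on {0..} \<eta>" using sc_convex[OF \<eta>conv] by simp
  have tan: "\<eta> z - \<eta> c \<ge> \<eta>d c * (z - c)" if "0 < c" "0 \<le> z" for c z
  proof -
    have "c \<in> interior {0..}" using that(1) by simp
    moreover have "z \<in> {0..}" "c \<in> {0..}" using that by auto
    ultimately show ?thesis
      using convex_on_imp_above_tangent[OF cv connected_Ici _ _ \<eta>d[of c]] by blast
  qed
  have key: "\<gamma> * (\<eta> q - \<eta> p) \<le> q - p" if "0 \<le> p" "p \<le> q" "q \<le> \<beta>" for p q
  proof (cases "p = q")
    case True then show ?thesis by simp
  next
    case False
    then have q0: "0 < q" using that by simp
    have t1: "\<eta> p - \<eta> q \<ge> \<eta>d q * (p - q)" using tan[OF q0 that(1)] .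
    have t2: "\<eta>d q \<le> \<eta>d \<beta>"
    proof (cases "q = \<beta>")
      case False
      then have qb: "q < \<beta>" using that by simp
      have "\<eta> \<beta> - \<eta> q \<ge> \<eta>d q * (\<beta> - q)" using tan[OF q0] \<beta> by simp
      moreover have "\<eta> q - \<eta> \<beta> \<ge> \<eta>d \<beta> * (q - \<beta>)" using tan[of \<beta> q] q0 qb by simp
      ultimately have "(\<eta>d \<beta> - \<eta>d q) * (\<beta> - q) \<ge> 0" by (simp add: algebra_simps)
      then show ?thesis using qb by (simp add: zero_le_mult_iff)
    qed simp
    have "\<eta> q - \<eta> p \<le> \<eta>d q * (q - p)" using t1 by (simp add: algebra_simps)
    also have "\<dots> \<le> \<eta>d \<beta> * (q - p)" using t2 that by (simp add: mult_right_mono)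
    finally have "\<gamma> * (\<eta> q - \<eta> p) \<le> \<gamma> * (\<eta>d \<beta> * (q - p))"
      using \<gamma> by (simp add: mult_left_mono)
    also have "\<dots> = q - p" using \<beta>(2) by (simp add: mult.assoc[symmetric])
    finally show ?thesis .
  qed
  have mono': "0 \<le> \<gamma> * (\<eta> q - \<eta> p)" if "0 \<le> p" "p \<le> q" for p q
  proof -
    have "p \<in> {0..}" "q \<in> {0..}" using that by auto
    then have "\<eta> p \<le> \<eta> q" using mono_onD[OF \<eta>mono] that(2) by blast
    then show ?thesis using \<gamma> by simp
  qed
  show ?thesis
  proof (cases "y \<le> \<beta>")
    case True
    then have e: "psi \<beta> \<gamma> \<eta> y - psi \<beta> \<gamma> \<eta> x = \<gamma> * (\<eta> y - \<eta> x)"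
      using xy by (simp add: psi_def min_def right_diff_distrib)
    have "\<gamma> * (\<eta> y - \<eta> x) \<le> y - x" using key[of x y] xy True by blast
    moreover have "0 \<le> \<gamma> * (\<eta> y - \<eta> x)" using mono'[of x y] xy by blast
    ultimately show ?thesis unfolding e by linarith
  next
    case False
    show ?thesis
    proof (cases "x \<le> \<beta>")
      case True
      then have e: "psi \<beta> \<gamma> \<eta> y - psi \<beta> \<gamma> \<eta> x = y - \<beta> + \<gamma> * (\<eta> \<beta> - \<eta> x)"
        using xy False by (simp add: psi_def min_def right_diff_distrib)
      have "\<gamma> * (\<eta> \<beta> - \<eta> x) \<le> \<beta> - x" using key[of x \<beta>] xy True by blast
      moreover have "0 \<le> \<gamma> * (\<eta> \<beta> - \<eta> x)" using mono'[of x \<beta>] xy True by blast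
      ultimately show ?thesis unfolding e using False by linarith
    next
      case False
      then show ?thesis using \<open>\<not> y \<le> \<beta>\<close> xy by (simp add: psi_def)
    qed
  qed
qed

lemma max0_lip: "\<bar>max 0 (p::real) - max 0 q\<bar> \<le> \<bar>p - q\<bar>"
  by (simp add: max_def)

theorem proposition4:
  fixes P yH yL u \<gamma> \<beta> :: real
    and C Cd C2 \<eta> \<eta>d \<eta>2 :: "real \<Rightarrow> real"
  defines "g \<equiv> profit P yH yL u \<gamma> \<beta> C Cd \<eta>"
  assumes P: "P > 0" and y: "yH > yL" "yL \<ge> 0"
    and \<gamma>: "0 < \<gamma>" "\<gamma> \<le> 1"
    and C0: "C 0 = 0"
    and Cmono: "mono_on {0..<1} C"
    and Cconv: "strict_convex_on {0..<1} C"
    and Cd: "\<And>a. a \<in> {0..<1} \<Longrightarrow> (C has_real_derivative Cd a) (at a within {0..<1})"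
    and C2: "\<And>a. a \<in> {0..<1} \<Longrightarrow> (Cd has_real_derivative C2 a) (at a within {0..<1})"
    and Clim: "filterlim C at_top (at_left 1)"
    and \<eta>0: "\<eta> 0 = 0"
    and \<eta>mono: "mono_on {0..} \<eta>"
    and \<eta>conv: "strict_convex_on {0..} \<eta>"
    and \<eta>d: "\<And>x. x \<in> {0..} \<Longrightarrow> (\<eta> has_real_derivative \<eta>d x) (at x within {0..})"
    and \<eta>2: "\<And>x. x \<in> {0..} \<Longrightarrow> (\<eta>d has_real_derivative \<eta>2 x) (at x within {0..})"
    and \<beta>: "\<beta> \<ge> 0" "\<gamma> * \<eta>d \<beta> = 1"
  shows "(Cd 0 < P * yH - P * yL \<longrightarrow>
            (\<exists>D. (g has_real_derivative D) (at_right 0) \<and> D > 0) \<and>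
            (\<forall>a\<in>{0..<1}. (\<forall>x\<in>{0..<1}. g x \<le> g a) \<longrightarrow> a > 0))
       \<and> (0 \<le> \<beta> \<and> \<beta> \<le> u \<longrightarrow>
            (\<forall>D. (g has_real_derivative D) (at_right 0) \<and> D > 0 \<longrightarrow> Cd 0 < P * yH - P * yL))"
proof -
  define \<psi> where "\<psi> = psi \<beta> \<gamma> \<eta>"
  define wL where "wL = wL_star C Cd u"
  define wH where "wH = wH_star C Cd u"
  have wL0: "wL 0 = max 0 u" by (simp add: wL_def wL_star_def C0)
  have wLnn: "wL a \<ge> 0" for a by (simp add: wL_def wL_star_def)
  have wHeq: "wH a = wL a + Cd a" for a by (simp add: wH_def wL_def wH_star_def)
  have Cdnn: "Cd a \<ge> 0" if "a \<in> {0..<1}" for a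
    using deriv_nonneg[OF Cmono that Cd[OF that]] .
  have lipo: "0 \<le> \<psi> y - \<psi> x \<and> \<psi> y - \<psi> x \<le> y - x" if "0 \<le> x" "x \<le> y" for x y
    unfolding \<psi>_def using psi_lip_le[OF \<gamma>(1) \<eta>mono \<eta>conv \<eta>d \<beta> that] by blast
  have lip: "\<bar>\<psi> x - \<psi> y\<bar> \<le> \<bar>x - y\<bar>" if "0 \<le> x" "0 \<le> y" for x y
  proof (cases "x \<le> y")
    case True then show ?thesis using lipo[of x y] that by linarith
  next
    case False then show ?thesis using lipo[of y x] that by linarith
  qed
  have geq: "g a = P*yL + a*(P*yH-P*yL) - a*\<psi>(wH a) - (1-a)*\<psi>(wL a)" for a
    unfolding g_def profit_def Let_def \<psi>_def psi_def wH_def wL_def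
    by (simp add: algebra_simps)
  have sub: "{0..1/2} \<subseteq> {0..<(1::real)}" by auto
  have dC: "(C has_real_derivative Cd 0) (at_right 0)"
    using has_field_derivative_subset[OF Cd[of 0] sub] by (simp add: at_within_Icc_at_right)
  have dCd: "(Cd has_real_derivative C2 0) (at_right 0)"
    using has_field_derivative_subset[OF C2[of 0] sub] by (simp add: at_within_Icc_at_right)
  have limCa: "((\<lambda>a. C a / a) \<longlongrightarrow> Cd 0) (at_right 0)"
    using dC by (simp add: has_field_derivative_iff C0)
  have limC: "(C \<longlongrightarrow> 0) (at_right 0)"
    using DERIV_continuous[OF dC] C0 by (simp add: continuous_within)
  have limCd: "(Cd \<longlongrightarrow> Cd 0) (at_right 0)"
    using DERIV_continuous[OF dCd] by (simp add: continuous_within)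
  have ev01: "eventually (\<lambda>a. 0 < a \<and> a < 1) (at_right (0::real))"
    unfolding eventually_at_right_field by (intro exI[of _ 1]) auto
  have E: "((\<lambda>a. \<bar>C a / a - Cd a\<bar>) \<longlongrightarrow> 0) (at_right 0)"
    using tendsto_rabs[OF tendsto_diff[OF limCa limCd]] by simp
  have E2: "((\<lambda>a. \<bar>C a - a * Cd a\<bar>) \<longlongrightarrow> 0) (at_right 0)"
  proof -
    have "((\<lambda>a. a) \<longlongrightarrow> 0) (at_right (0::real))"
      by (simp add: tendsto_ident_at tendsto_within_subset)
    then have "((\<lambda>a. a * Cd a) \<longlongrightarrow> 0 * Cd 0) (at_right 0)"
      using limCd by (intro tendsto_mult)
    then show ?thesis using tendsto_rabs[OF tendsto_diff[OF limC]] by fastforce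
  qed
  have E3: "((\<lambda>a. \<bar>C a - a * Cd a\<bar> + \<bar>Cd a - Cd 0\<bar>) \<longlongrightarrow> 0) (at_right 0)"
  proof -
    have "((\<lambda>a. \<bar>Cd a - Cd 0\<bar>) \<longlongrightarrow> 0) (at_right 0)"
      using tendsto_rabs[OF tendsto_diff[OF limCd tendsto_const[of "Cd 0"]]] by simp
    then show ?thesis using tendsto_add[OF E2] by fastforce
  qed
  have wLdiff: "\<bar>wL a - wL 0\<bar> \<le> \<bar>C a - a * Cd a\<bar>" for a
    unfolding wL0 using max0_lip[of "u - a * Cd a + C a" u]
    by (simp add: wL_def wL_star_def algebra_simps)
  have L3: "((\<lambda>a. (\<psi> (wL a) - \<psi> (wL 0)) / a) \<longlongrightarrow> 0) (at_right 0)"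
  proof (rule Lim_null_comparison[OF _ E])
    show "eventually (\<lambda>a. norm ((\<psi> (wL a) - \<psi> (wL 0)) / a) \<le> \<bar>C a / a - Cd a\<bar>) (at_right 0)"
      using ev01
    proof (rule eventually_mono)
      fix a :: real assume a: "0 < a \<and> a < 1"
      have "\<bar>\<psi> (wL a) - \<psi> (wL 0)\<bar> \<le> \<bar>C a - a * Cd a\<bar>"
        using lip[OF wLnn wLnn, of a 0] wLdiff[of a] by linarith
      then have "\<bar>\<psi> (wL a) - \<psi> (wL 0)\<bar> / a \<le> \<bar>C a - a * Cd a\<bar> / a"
        using a by (simp add: divide_right_mono)
      also have "\<bar>C a - a * Cd a\<bar> / a = \<bar>C a / a - Cd a\<bar>"
        using a by (simp add: field_simps abs_div_pos[symmetric]) 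
      finally show "norm ((\<psi> (wL a) - \<psi> (wL 0)) / a) \<le> \<bar>C a / a - Cd a\<bar>"
        using a by simp
    qed
  qed
  have L2: "((\<lambda>a. \<psi> (wL a)) \<longlongrightarrow> \<psi> (wL 0)) (at_right 0)"
  proof -
    have "((\<lambda>a. \<psi> (wL a) - \<psi> (wL 0)) \<longlongrightarrow> 0) (at_right 0)"
    proof (rule Lim_null_comparison[OF _ E2])
      show "eventually (\<lambda>a. norm (\<psi> (wL a) - \<psi> (wL 0)) \<le> \<bar>C a - a * Cd a\<bar>) (at_right 0)"
        using lip[OF wLnn wLnn] wLdiff
        by (intro always_eventually allI) (metis real_norm_def order_trans)
    qed
    then show ?thesis by (simp add: LIM_zero_iff)
  qed
  have L1: "((\<lambda>a. \<psi> (wH a)) \<longlongrightarrow> \<psi> (wH 0)) (at_right 0)"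
  proof -
    have "((\<lambda>a. \<psi> (wH a) - \<psi> (wH 0)) \<longlongrightarrow> 0) (at_right 0)"
    proof (rule Lim_null_comparison[OF _ E3])
      show "eventually (\<lambda>a. norm (\<psi> (wH a) - \<psi> (wH 0)) \<le> \<bar>C a - a * Cd a\<bar> + \<bar>Cd a - Cd 0\<bar>) (at_right 0)"
        using ev01
      proof (rule eventually_mono)
        fix a :: real assume a: "0 < a \<and> a < 1"
        have nn: "wH a \<ge> 0" "wH 0 \<ge> 0" using wLnn[of a] wLnn[of 0] Cdnn[of a] Cdnn[of 0] a
          by (auto simp: wHeq)
        have "\<bar>wH a - wH 0\<bar> \<le> \<bar>C a - a * Cd a\<bar> + \<bar>Cd a - Cd 0\<bar>"
          using wLdiff[of a] by (simp add: wHeq)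
        then show "norm (\<psi> (wH a) - \<psi> (wH 0)) \<le> \<bar>C a - a * Cd a\<bar> + \<bar>Cd a - Cd 0\<bar>"
          using lip[OF nn] by simp
      qed
    qed
    then show ?thesis by (simp add: LIM_zero_iff)
  qed
  define D0 where "D0 = P*yH - P*yL - \<psi> (wH 0) + \<psi> (wL 0)"
  have dg: "(g has_real_derivative D0) (at_right 0)"
    unfolding has_field_derivative_iff
  proof (rule Lim_transform_eventually)
    show "((\<lambda>a. P*yH - P*yL - \<psi> (wH a) + \<psi> (wL a) - (\<psi> (wL a) - \<psi> (wL 0)) / a)
            \<longlongrightarrow> D0) (at_right 0)"
      using tendsto_diff[OF tendsto_add[OF tendsto_diff[OF tendsto_const L1] L2] L3]
      by (simp add: D0_def)
    show "eventually (\<lambda>a. P*yH - P*yL - \<psi> (wH a) + \<psi> (wL a) - (\<psi> (wL a) - \<psi> (wL 0)) / a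
            = (g a - g 0) / (a - 0)) (at_right 0)"
      using ev01
    proof (rule eventually_mono)
      fix a :: real assume a: "0 < a \<and> a < 1"
      then show "P*yH - P*yL - \<psi> (wH a) + \<psi> (wL a) - (\<psi> (wL a) - \<psi> (wL 0)) / a
            = (g a - g 0) / (a - 0)"
        unfolding geq by (simp add: field_simps)
    qed
  qed
  have uniq: "D = D0" if "(g has_real_derivative D) (at_right 0)" for D
    using that dg unfolding has_field_derivative_iff
    by (rule tendsto_unique[rotated]) (simp add: trivial_limit_at_right_real)
  have Cd0: "Cd 0 \<ge> 0" using Cdnn[of 0] by simp
  have D0ge: "D0 \<ge> P*yH - P*yL - Cd 0"
    using lipo[OF wLnn[of 0], of "wH 0"] Cd0 by (simp add: D0_def wHeq)
  have part1: "(\<exists>D. (g has_real_derivative D) (at_right 0) \<and> D > 0) \<and>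
            (\<forall>a\<in>{0..<1}. (\<forall>x\<in>{0..<1}. g x \<le> g a) \<longrightarrow> a > 0)"
    if h: "Cd 0 < P * yH - P * yL"
  proof
    have D0pos: "D0 > 0" using h D0ge by linarith
    then show "\<exists>D. (g has_real_derivative D) (at_right 0) \<and> D > 0" using dg by blast
    show "\<forall>a\<in>{0..<1}. (\<forall>x\<in>{0..<1}. g x \<le> g a) \<longrightarrow> a > 0"
    proof (intro ballI impI)
      fix a :: real assume a: "a \<in> {0..<1}" and mx: "\<forall>x\<in>{0..<1}. g x \<le> g a"
      show "a > 0"
      proof (rule ccontr)
        assume "\<not> a > 0"
        then have a0: "a = 0" using a by simp
        have "eventually (\<lambda>x. (g x - g 0) / (x - 0) > 0) (at_right 0)"
          using dg D0pos unfolding has_field_derivative_iff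
          by (rule order_tendstoD)
        then have "eventually (\<lambda>x. False) (at_right (0::real))"
          using ev01
        proof (rule eventually_elim2)
          fix x :: real assume q: "(g x - g 0) / (x - 0) > 0" and x: "0 < x \<and> x < 1"
          have "g x \<le> g 0" using mx a0 x by auto
          moreover have "g x - g 0 > 0" using q x by (simp add: zero_less_divide_iff)
          ultimately show False by simp
        qed
        then show False by (simp add: trivial_limit_at_right_real)
      qed
    qed
  qed
  have part2: "Cd 0 < P * yH - P * yL"
    if hb: "0 \<le> \<beta> \<and> \<beta> \<le> u" and hD: "(g has_real_derivative D) (at_right 0)" "D > 0" for D
  proof -
    have "wL 0 = u" using wL0 hb by simp
    then have "\<psi> (wH 0) - \<psi> (wL 0) = Cd 0"
      using hb Cd0 by (simp add: wHeq \<psi>_def psi_def)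
    then have "D0 = P*yH - P*yL - Cd 0" by (simp add: D0_def)
    then show ?thesis using uniq[OF hD(1)] hD(2) by simp
  qed
  show ?thesis using part1 part2 by blast
qed

end
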